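(* For every $n\ge 4$, the pendant path graph $P_n^*$ is not $n$-EKR.
   Context: An independent $r$-set of a graph $G$ is a set of $r$ pairwise non-adjacent vertices; $\mathcal{I}^{(r)}(G)$ is the family of all independent $r$-sets, and $\mathcal{I}^{(r)}_v(G)$ the subfamily of those containing $v$ (the $r$-star centred at $v$). A family is intersecting if every two members have nonempty intersection. $G$ is $r$-EKR if some $r$-star $\mathcal{I}^{(r)}_v(G)$ has size equal to the maximum size of an intersecting subfamily of $\mathcal{I}^{(r)}(G)$. For a graph $G$ with vertices $x_1,\dots,x_n$, the pendant graph $G^*$ has vertex set $\{x_1,\dots,x_n\}\sqcup\{p_1,\dots,p_n\}$ and edge set $E(G)\sqcup\{x_1p_1,\dots,x_np_n\}$. $P_n$ is the path with vertices $x_1,\dots,x_n$ and edges $x_jx_{j+1}$, and $P_n^*$ its pendant graph. *)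

theory Defs
  imports Main
begin

definition indep_sets :: "'a set \<Rightarrow> ('a \<Rightarrow> 'a \<Rightarrow> bool) \<Rightarrow> nat \<Rightarrow> 'a set set" where
  "indep_sets V adj r =
     {A. A \<subseteq> V \<and> finite A \<and> card A = r \<and> (\<forall>x\<in>A. \<forall>y\<in>A. x \<noteq> y \<longrightarrow> \<not> adj x y)}"

definition star :: "'a set \<Rightarrow> ('a \<Rightarrow> 'a \<Rightarrow> bool) \<Rightarrow> nat \<Rightarrow> 'a \<Rightarrow> 'a set set" where
  "star V adj r v = {A \<in> indep_sets V adj r. v \<in> A}"

definition intersecting :: "'a set set \<Rightarrow> bool" where
  "intersecting F \<longleftrightarrow> (\<forall>A\<in>F. \<forall>B\<in>F. A \<inter> B \<noteq> {})"

definition max_intersecting :: "'a set \<Rightarrow> ('a \<Rightarrow> 'a \<Rightarrow> bool) \<Rightarrow> nat \<Rightarrow> nat" where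
  "max_intersecting V adj r =
     Max {card F | F. F \<subseteq> indep_sets V adj r \<and> intersecting F}"

definition EKR :: "'a set \<Rightarrow> ('a \<Rightarrow> 'a \<Rightarrow> bool) \<Rightarrow> nat \<Rightarrow> bool" where
  "EKR V adj r \<longleftrightarrow> (\<exists>v\<in>V. card (star V adj r v) = max_intersecting V adj r)"

text \<open>Pendant graph: x_i is Inl x_i, the pendant vertex p_i is Inr x_i.\<close>

definition pendant_vertices :: "'a set \<Rightarrow> ('a + 'a) set" where
  "pendant_vertices V = Inl ` V \<union> Inr ` V"

fun pendant_adj :: "('a \<Rightarrow> 'a \<Rightarrow> bool) \<Rightarrow> 'a + 'a \<Rightarrow> 'a + 'a \<Rightarrow> bool" where
  "pendant_adj adj (Inl x) (Inl y) = adj x y"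
| "pendant_adj adj (Inl x) (Inr y) = (x = y)"
| "pendant_adj adj (Inr x) (Inl y) = (x = y)"
| "pendant_adj adj (Inr x) (Inr y) = False"

definition path_vertices :: "nat \<Rightarrow> nat set" where
  "path_vertices n = {1..n}"

definition path_adj :: "nat \<Rightarrow> nat \<Rightarrow> bool" where
  "path_adj i j \<longleftrightarrow> j = i + 1 \<or> i = j + 1"

end

theory Submission
  imports Defs
begin

lemma key:
  assumes fin: "finite V" and cardV: "card V = 2*r"
    and S: "S \<in> indep_sets V adj r" and vS: "v \<notin> S"
    and a: "a \<in> V - S" and b: "b \<in> V - S" and ab: "a \<noteq> b" "adj a b"
  shows "card (star V adj r v) < max_intersecting V adj r"
proof -
  let ?I = "indep_sets V adj r"
  let ?F = "star V adj r v \<union> {S}"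
  have finI: "finite ?I"
    by (rule finite_subset[of _ "Pow V"]) (auto simp: indep_sets_def fin)
  have SV: "S \<subseteq> V" "finite S" "card S = r" using S by (auto simp: indep_sets_def)
  have r0: "r \<ge> 1" using a fin cardV card_gt_0_iff[of V] by auto
  have Sne: "S \<noteq> {}" using SV r0 by auto
  have cVS: "card (V - S) = r" using SV cardV fin by (simp add: card_Diff_subset)
  have Fsub: "?F \<subseteq> ?I" using S by (auto simp: star_def)
  have inter: "intersecting ?F"
    unfolding intersecting_def
  proof (intro ballI)
    have disj: False if A: "A \<in> star V adj r v" and e: "A \<inter> S = {}" for A
    proof -
      have AI: "A \<subseteq> V" "finite A" "card A = r"
        "\<forall>x\<in>A. \<forall>y\<in>A. x \<noteq> y \<longrightarrow> \<not> adj x y"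
        using A by (auto simp: star_def indep_sets_def)
      have "A \<subseteq> V - S" using AI e by auto
      hence "A = V - S" using card_subset_eq[of "V - S" A] fin AI cVS by auto
      thus False using AI(4) a b ab by auto
    qed
    fix A B assume A: "A \<in> ?F" and B: "B \<in> ?F"
    show "A \<inter> B \<noteq> {}"
    proof (cases "A = S")
      case True
      then show ?thesis
      proof (cases "B = S")
        case True with \<open>A = S\<close> Sne show ?thesis by auto
      next
        case False
        then have "B \<in> star V adj r v" using B by auto
        then show ?thesis using disj[of B] True by auto
      qed
    next
      case False
      then have A': "A \<in> star V adj r v" using A by auto
      show ?thesis
      proof (cases "B = S")
        case True then show ?thesis using disj[OF A'] by auto
      next
        case False
        then have "B \<in> star V adj r v" using B by auto
        then show ?thesis using A' by (auto simp: star_def)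
      qed
    qed
  qed
  have finstar: "finite (star V adj r v)"
    by (rule finite_subset[OF _ finI]) (auto simp: star_def)
  have cF: "card ?F = card (star V adj r v) + 1"
    using finstar vS by (simp add: star_def)
  have finM: "finite {card F | F. F \<subseteq> ?I \<and> intersecting F}"
  proof -
    have "{card F | F. F \<subseteq> ?I \<and> intersecting F} \<subseteq> card ` Pow ?I" by auto
    thus ?thesis using finI finite_subset by blast
  qed
  have "card ?F \<le> max_intersecting V adj r"
    unfolding max_intersecting_def
    by (rule Max_ge[OF finM]) (use Fsub inter in blast)
  thus ?thesis using cF by simp
qed

lemma cardP: "card (pendant_vertices {1..n::nat}) = 2*n"
  unfolding pendant_vertices_def
  by (subst card_Un_disjoint) (auto simp: card_image inj_on_def)

theorem lemma9:
  fixes n :: nat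
  assumes "n \<ge> 4"
  shows "\<not> EKR (pendant_vertices (path_vertices n)) (pendant_adj path_adj) n"
proof
  let ?V = "pendant_vertices {1..n}"
  have fin: "finite ?V" by (simp add: pendant_vertices_def)
  assume "EKR (pendant_vertices (path_vertices n)) (pendant_adj path_adj) n"
  then obtain v where v: "v \<in> ?V"
    and eq: "card (star ?V (pendant_adj path_adj) n v) = max_intersecting ?V (pendant_adj path_adj) n"
    by (auto simp: EKR_def path_vertices_def)
  show False
  proof (cases v)
    case (Inl i)
    let ?S = "Inr ` {1..n}"
    have S: "?S \<in> indep_sets ?V (pendant_adj path_adj) n"
      by (auto simp: indep_sets_def pendant_vertices_def card_image)
    have "card (star ?V (pendant_adj path_adj) n v) < max_intersecting ?V (pendant_adj path_adj) n"
      by (rule key[OF fin cardP S, of v "Inl 1" "Inl 2"])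
         (use assms Inl in \<open>auto simp: pendant_vertices_def path_adj_def\<close>)
    then show False using eq by simp
  next
    case (Inr i)
    have i: "i \<in> {1..n}" using v Inr by (auto simp: pendant_vertices_def)
    obtain j where j: "j \<ge> 1" "j + 1 \<le> n" "j \<noteq> i" "j + 1 \<noteq> i"
    proof (cases "i \<le> 2")
      case True thus ?thesis using that[of 3] assms by auto
    next
      case False thus ?thesis using that[of 1] assms by auto
    qed
    let ?S = "insert (Inl i) (Inr ` ({1..n} - {i}))"
    have cS: "card ?S = n"
    proof -
      have "card (Inr ` ({1..n} - {i}) :: (nat+nat) set) = n - 1"
        using i by (simp add: card_image)
      moreover have "Inl i \<notin> (Inr ` ({1..n} - {i}) :: (nat+nat) set)" by auto
      ultimately show ?thesis using i assms by (simp add: card_insert_disjoint)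
    qed
    have S: "?S \<in> indep_sets ?V (pendant_adj path_adj) n"
      using cS i by (auto simp: indep_sets_def pendant_vertices_def)
    have "card (star ?V (pendant_adj path_adj) n v) < max_intersecting ?V (pendant_adj path_adj) n"
      by (rule key[OF fin cardP S, of v "Inl j" "Inl (j+1)"])
         (use j Inr in \<open>auto simp: pendant_vertices_def path_adj_def\<close>)
    then show False using eq by simp
  qed
qed

end
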